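(* Let $k$ be a field of characteristic $\neq 2$, $\mathcal A=k[t,t^{-1},(1-t)^{-1}]\subset k(t)$, $t'=1-t^{-1}$, $t''=(1-t)^{-1}$, $\mathfrak g=\mathfrak{sl}_2(k)\otimes_k\mathcal A$, and let $x=\begin{pmatrix}-1&2\\0&1\end{pmatrix}$, $y=\begin{pmatrix}-1&0\\-2&1\end{pmatrix}$, $z=\begin{pmatrix}1&0\\0&-1\end{pmatrix}$. Put $u_0=\tfrac14\bigl(z\otimes 1+x\otimes t''+y\otimes(t''-1)\bigr)$, $u_1=\tfrac14\bigl(x\otimes 1+y\otimes t+z\otimes(t-1)\bigr)$, $u_2=\tfrac14\bigl(y\otimes 1+z\otimes t'+x\otimes(t'-1)\bigr)$. Then: (i) $\{u_0,u_1,u_2\}$ is a basis of $\mathfrak g$ as an $\mathcal A$-module; (ii) $[u_0,u_1]=-u_2t$, $[u_1,u_2]=-u_0t'$, $[u_2,u_0]=-u_1t''$; (iii) $u_0,u_1,u_2$ generate $\mathfrak g$ as a Lie algebra over $k$.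
   Context: $\mathfrak g$ is a Lie algebra over $\mathcal A$ with bracket $[a\otimes f,b\otimes g]=[a,b]\otimes fg$; for $g\in\mathfrak g$ and $a\in\mathcal A$, $ga$ denotes the $\mathcal A$-module action. *)

theory Defs
  imports "HOL-Analysis.Analysis" "HOL-Computational_Algebra.Polynomial" "HOL-Computational_Algebra.Fraction_Field"
begin

type_synonym 'a rf = "'a poly fract"

definition rf_of_poly :: "'a::field poly \<Rightarrow> 'a rf" where
  "rf_of_poly p = Fract p 1"

definition tt :: "'a::field rf" where
  "tt = rf_of_poly [:0, 1:]"

definition tt' :: "'a::field rf" where
  "tt' = 1 - inverse tt"

definition tt'' :: "'a::field rf" where
  "tt'' = inverse (1 - tt)"

definition A_ring :: "'a::field rf set" where
  "A_ring = {f. \<exists>p (a::nat) (b::nat). f = rf_of_poly p / (tt ^ a * (1 - tt) ^ b)}"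

text \<open>g = sl_2(k) \<otimes>_k A, realised as the traceless 2x2 matrices with entries in A.\<close>
definition g_alg :: "('a::field rf ^ 2 ^ 2) set" where
  "g_alg = {M. (\<forall>i j. M $ i $ j \<in> A_ring) \<and> trace M = 0}"

definition lie_br :: "'a::field rf ^ 2 ^ 2 \<Rightarrow> 'a rf ^ 2 ^ 2 \<Rightarrow> 'a rf ^ 2 ^ 2" where
  "lie_br M N = M ** N - N ** M"

definition mact :: "'a::field rf ^ 2 ^ 2 \<Rightarrow> 'a rf \<Rightarrow> 'a rf ^ 2 ^ 2" where
  "mact M f = (\<chi> i j. M $ i $ j * f)"

definition tens :: "'a::field ^ 2 ^ 2 \<Rightarrow> 'a rf \<Rightarrow> 'a rf ^ 2 ^ 2" where
  "tens a f = (\<chi> i j. rf_of_poly [: a $ i $ j :] * f)"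

definition mk2 :: "'a::zero \<Rightarrow> 'a \<Rightarrow> 'a \<Rightarrow> 'a \<Rightarrow> 'a ^ 2 ^ 2" where
  "mk2 a b c d = vector [vector [a, b], vector [c, d]]"

definition xm :: "'a::field ^ 2 ^ 2" where "xm = mk2 (-1) 2 0 1"
definition ym :: "'a::field ^ 2 ^ 2" where "ym = mk2 (-1) 0 (-2) 1"
definition zm :: "'a::field ^ 2 ^ 2" where "zm = mk2 1 0 0 (-1)"

definition u0 :: "'a::field rf ^ 2 ^ 2" where
  "u0 = mact (tens zm 1 + tens xm tt'' + tens ym (tt'' - 1)) (1/4)"
definition u1 :: "'a::field rf ^ 2 ^ 2" where
  "u1 = mact (tens xm 1 + tens ym tt + tens zm (tt - 1)) (1/4)"
definition u2 :: "'a::field rf ^ 2 ^ 2" where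
  "u2 = mact (tens ym 1 + tens zm tt' + tens xm (tt' - 1)) (1/4)"

inductive_set lie_gen :: "('a::field rf ^ 2 ^ 2) set \<Rightarrow> ('a rf ^ 2 ^ 2) set"
  for S where
  base: "M \<in> S \<Longrightarrow> M \<in> lie_gen S"
| zero: "0 \<in> lie_gen S"
| add: "M \<in> lie_gen S \<Longrightarrow> N \<in> lie_gen S \<Longrightarrow> M + N \<in> lie_gen S"
| smul: "M \<in> lie_gen S \<Longrightarrow> mact M (rf_of_poly [: c :]) \<in> lie_gen S"
| br: "M \<in> lie_gen S \<Longrightarrow> N \<in> lie_gen S \<Longrightarrow> lie_br M N \<in> lie_gen S"

end

theory Submission
  imports Defs
begin


definition K :: "'a::field \<Rightarrow> 'a rf" where "K c = rf_of_poly [:c:]"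

lemma rf_add: "rf_of_poly (p + q) = rf_of_poly p + rf_of_poly q"
  by (simp add: rf_of_poly_def)
lemma rf_mult: "rf_of_poly (p * q) = rf_of_poly p * rf_of_poly q"
  by (simp add: rf_of_poly_def)
lemma rf_uminus: "rf_of_poly (- p) = - rf_of_poly p"
  by (simp add: rf_of_poly_def)
lemma rf_0: "rf_of_poly 0 = 0"
  by (simp add: rf_of_poly_def Zero_fract_def)
lemma rf_1: "rf_of_poly 1 = 1"
  by (simp add: rf_of_poly_def One_fract_def)
lemma rf_eq0: "rf_of_poly p = 0 \<longleftrightarrow> p = 0"
  by (simp add: rf_of_poly_def Zero_fract_def eq_fract)

lemma K_add: "K (a + b) = K a + K b" by (simp add: K_def rf_add[symmetric])
lemma K_mult: "K (a * b) = K a * K b" by (simp add: K_def rf_mult[symmetric] mult.commute)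
lemma K_uminus: "K (- a) = - K a" by (simp add: K_def rf_uminus[symmetric])
lemma K_0: "K 0 = 0" by (simp add: K_def rf_0)
lemma K_1: "K 1 = 1" by (simp add: K_def rf_1[symmetric] one_pCons)
lemma K_2: "K 2 = 2" by (metis K_1 K_add one_add_one)
lemma K_eq0: "K a = 0 \<longleftrightarrow> a = 0" by (simp add: K_def rf_eq0)

lemma tt_nz: "(tt::'a::field rf) \<noteq> 0"
  by (simp add: tt_def rf_eq0)
lemma omtt_nz: "1 - (tt::'a::field rf) \<noteq> 0"
proof -
  have "1 - (tt::'a rf) = rf_of_poly [:1, -1:]"
    by (simp add: tt_def rf_1[symmetric] rf_uminus[symmetric] rf_add[symmetric] diff_conv_add_uminus one_pCons)
  then show ?thesis by (simp add: rf_eq0)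
qed

lemma mk2_nth [simp]:
  "mk2 a b c d $ 1 $ 1 = a" "mk2 a b c d $ 1 $ 2 = b"
  "mk2 a b c d $ 2 $ 1 = c" "mk2 a b c d $ 2 $ 2 = d"
  by (simp_all add: mk2_def)

lemma mk2_eq: "mk2 a b c d = mk2 a' b' c' d' \<longleftrightarrow> a = a' \<and> b = b' \<and> c = c' \<and> d = d'"
  by (auto simp: vec_eq_iff forall_2)

lemma mk2_expand: "(M::'b::zero^2^2) = mk2 (M$1$1) (M$1$2) (M$2$1) (M$2$2)"
  by (auto simp: vec_eq_iff forall_2)

lemma mk2_add: "mk2 a b c d + mk2 a' b' c' d' = mk2 (a+a') (b+b') (c+c') (d+d')"
  by (auto simp: vec_eq_iff forall_2)
lemma mk2_diff: "mk2 a b c d - mk2 a' b' c' d' = mk2 (a-a') (b-b') (c-c') (d-d')"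
  by (auto simp: vec_eq_iff forall_2)
lemma mk2_uminus: "- mk2 a b c d = mk2 (-a) (-b) (-c) (-d)"
  by (auto simp: vec_eq_iff forall_2)
lemma mk2_zero: "(0::'b::ab_group_add^2^2) = mk2 0 0 0 0"
  by (auto simp: vec_eq_iff forall_2)
lemma mact_mk2: "mact (mk2 a b c d) f = mk2 (a*f) (b*f) (c*f) (d*f)"
  by (auto simp: vec_eq_iff forall_2 mact_def)
lemma tens_mk2: "tens (mk2 a b c d) f = mk2 (K a*f) (K b*f) (K c*f) (K d*f)"
  by (auto simp: vec_eq_iff forall_2 tens_def K_def)
lemma br_mk2: "lie_br (mk2 a b c d) (mk2 e f g h) =
  mk2 (a*e+b*g - (e*a+f*c)) (a*f+b*h - (e*b+f*d)) (c*e+d*g - (g*a+h*c)) (c*f+d*h - (g*b+h*d))"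
  by (auto simp: vec_eq_iff forall_2 lie_br_def matrix_matrix_mult_def sum_2)
lemma trace_mk2: "trace (mk2 a b c d) = a + d"
  by (simp add: trace_def sum_2)

lemmas mk2_simps = mk2_add mk2_diff mk2_uminus mact_mk2 tens_mk2 br_mk2 mk2_eq
  xm_def ym_def zm_def K_0 K_1 K_2 K_uminus


context fixes dummy :: "'a::field" assumes char: "(2::'a) \<noteq> 0"
begin
lemma two_nz: "(2::'a rf) \<noteq> 0" using char by (metis K_2 K_eq0)
lemma four_nz: "(4::'a rf) \<noteq> 0" using two_nz by (metis mult_eq_0_iff num_double numeral_times_numeral)

lemmas nzs = two_nz four_nz tt_nz omtt_nz


lemma nz_num: "(numeral (Num.Bit0 n)::'a rf) \<noteq> 0 \<longleftrightarrow> (numeral n::'a rf) \<noteq> 0"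
  using two_nz by (metis mult_eq_0_iff numeral_Bit0 mult_2 )
lemma omtt_nz': "(tt::'a rf) \<noteq> 1" using omtt_nz by simp


lemma br01: "lie_br (u0::'a rf ^ 2 ^ 2) u1 = - mact u2 tt"
proof -
  define R :: "'a rf" where "R = 1 - tt"
  have tR: "tt = 1 - R" by (simp add: R_def)
  have Rnz: "R \<noteq> 0" using omtt_nz by (simp add: R_def)
  have s: "tt'' = inverse R" by (simp add: R_def tt''_def)
  show ?thesis
  unfolding u0_def u1_def u2_def tt'_def s
  apply (simp add: mk2_simps)
  apply (simp add: field_simps nzs nz_num Rnz)
  apply (simp add: tR algebra_simps)
  done
qed
lemma br20: "lie_br (u2::'a rf ^ 2 ^ 2) u0 = - mact u1 tt''"
proof -
  define R :: "'a rf" where "R = 1 - tt"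
  have tR: "tt = 1 - R" by (simp add: R_def)
  have Rnz: "R \<noteq> 0" using omtt_nz by (simp add: R_def)
  have s: "tt'' = inverse R" by (simp add: R_def tt''_def)
  show ?thesis
  unfolding u0_def u1_def u2_def tt'_def s
  apply (simp add: mk2_simps)
  apply (simp add: field_simps nzs nz_num Rnz)
  apply (simp add: tR algebra_simps)
  done
qed
lemma br12: "lie_br (u1::'a rf ^ 2 ^ 2) u2 = - mact u0 tt'"
  unfolding u0_def u1_def u2_def tt'_def tt''_def
  by (simp add: mk2_simps) (simp add: field_simps nzs nz_num omtt_nz')


end

lemma rf_power: "rf_of_poly (p ^ n) = rf_of_poly p ^ n"
  by (induction n) (simp_all add: rf_1 rf_mult)

lemma D_rf: "(tt::'a::field rf)^a*(1-tt)^b = rf_of_poly ([:0,1:]^a * [:1,-1:]^b)"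
proof -
  have "1 - (tt::'a rf) = rf_of_poly [:1, -1:]"
    by (simp add: tt_def rf_1[symmetric] rf_uminus[symmetric] rf_add[symmetric] diff_conv_add_uminus one_pCons)
  then show ?thesis by (simp add: rf_mult rf_power tt_def)
qed

lemma D_nz: "(tt::'a::field rf)^a*(1-tt)^b \<noteq> 0"
  using tt_nz omtt_nz by auto

lemma A_add: "f \<in> A_ring \<Longrightarrow> g \<in> A_ring \<Longrightarrow> (f + g :: 'a::field rf) \<in> A_ring"
proof -
  assume "f \<in> A_ring" "g \<in> A_ring"
  then obtain p a b q c d where f: "f = rf_of_poly p / (tt ^ a * (1 - tt) ^ b)"
    and g: "g = rf_of_poly q / (tt ^ c * (1 - tt) ^ d)" unfolding A_ring_def by blast
  have "f + g = (rf_of_poly p * (tt ^ c * (1 - tt) ^ d) + rf_of_poly q * (tt ^ a * (1 - tt) ^ b))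
       / ((tt ^ a * (1 - tt) ^ b) * (tt ^ c * (1 - tt) ^ d))"
    unfolding f g by (rule add_frac_eq) (rule D_nz)+
  also have "\<dots> = rf_of_poly (p * ([:0,1:]^c * [:1,-1:]^d) + q * ([:0,1:]^a * [:1,-1:]^b))
       / (tt ^ (a + c) * (1 - tt) ^ (b + d))"
  proof -
    have e1: "rf_of_poly (p * ([:0,1:]^c * [:1,-1:]^d)) = rf_of_poly p * (tt ^ c * (1 - tt) ^ d)"
      by (simp only: rf_mult D_rf)
    have e2: "rf_of_poly (q * ([:0,1:]^a * [:1,-1:]^b)) = rf_of_poly q * (tt ^ a * (1 - tt) ^ b)"
      by (simp only: rf_mult D_rf)
    have e3: "((tt::'a rf) ^ a * (1 - tt) ^ b) * (tt ^ c * (1 - tt) ^ d) = tt ^ (a + c) * (1 - tt) ^ (b + d)"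
      by (simp add: power_add mult_ac)
    show ?thesis by (simp only: rf_add e1 e2 e3)
  qed
  finally show ?thesis unfolding A_ring_def by blast
qed

lemma A_mult: "f \<in> A_ring \<Longrightarrow> g \<in> A_ring \<Longrightarrow> (f * g :: 'a::field rf) \<in> A_ring"
proof -
  assume "f \<in> A_ring" "g \<in> A_ring"
  then obtain p a b q c d where f: "f = rf_of_poly p / (tt ^ a * (1 - tt) ^ b)"
    and g: "g = rf_of_poly q / (tt ^ c * (1 - tt) ^ d)" unfolding A_ring_def by blast
  have "f * g = rf_of_poly (p * q) / (tt ^ (a + c) * (1 - tt) ^ (b + d))"
    unfolding f g by (simp add: rf_mult power_add mult_ac)
  then show ?thesis unfolding A_ring_def by blast
qed

lemma A_rf: "rf_of_poly p \<in> (A_ring :: 'a::field rf set)"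
proof -
  have "rf_of_poly p = rf_of_poly p / ((tt::'a rf) ^ 0 * (1 - tt) ^ 0)" by simp
  then show ?thesis unfolding A_ring_def by blast
qed

lemma A_uminus: "f \<in> A_ring \<Longrightarrow> (- f :: 'a::field rf) \<in> A_ring"
proof -
  assume "f \<in> A_ring"
  then obtain p a b where f: "f = rf_of_poly p / (tt ^ a * (1 - tt) ^ b)"
    unfolding A_ring_def by blast
  have "- f = rf_of_poly (- p) / (tt ^ a * (1 - tt) ^ b)" unfolding f by (simp add: rf_uminus)
  then show ?thesis unfolding A_ring_def by blast
qed

lemma A_diff: "f \<in> A_ring \<Longrightarrow> g \<in> A_ring \<Longrightarrow> (f - g :: 'a::field rf) \<in> A_ring"
  using A_add A_uminus by (metis diff_conv_add_uminus)

lemma A_K: "K c \<in> A_ring" unfolding K_def by (rule A_rf)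
lemma A_0: "0 \<in> (A_ring :: 'a::field rf set)" using A_K[of 0] by (simp add: K_0)
lemma A_1: "1 \<in> (A_ring :: 'a::field rf set)" using A_K[of 1] by (simp add: K_1)
lemma A_tt: "tt \<in> (A_ring :: 'a::field rf set)" unfolding tt_def by (rule A_rf)
lemma A_inv_tt: "inverse tt \<in> (A_ring :: 'a::field rf set)"
proof -
  have "inverse tt = rf_of_poly 1 / ((tt::'a rf) ^ 1 * (1 - tt) ^ 0)" by (simp add: rf_1 inverse_eq_divide)
  then show ?thesis unfolding A_ring_def by blast
qed
lemma A_tt'': "tt'' \<in> (A_ring :: 'a::field rf set)"
proof -
  have "tt'' = rf_of_poly 1 / ((tt::'a rf) ^ 0 * (1 - tt) ^ 1)" by (simp add: rf_1 inverse_eq_divide tt''_def)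
  then show ?thesis unfolding A_ring_def by blast
qed
lemma A_tt': "tt' \<in> (A_ring :: 'a::field rf set)"
  unfolding tt'_def by (intro A_diff A_1 A_inv_tt)

lemmas A_intros = A_add A_mult A_uminus A_diff A_K A_0 A_1 A_tt A_inv_tt A_tt' A_tt''

lemma mact_nth [simp]: "mact M f $ i $ j = M $ i $ j * f" by (simp add: mact_def)
lemma tens_nth [simp]: "tens a f $ i $ j = K (a $ i $ j) * f" by (simp add: tens_def K_def)



context fixes dummy :: "'a::field" assumes char: "(2::'a) \<noteq> 0"
begin

lemma A_quarter: "(1/4::'a rf) \<in> A_ring"
proof -
  have f: "(4::'a) \<noteq> 0" using char by (metis mult_eq_0_iff num_double numeral_times_numeral)
  have k4: "K (4::'a) = 4" by (metis K_2 K_mult num_double numeral_times_numeral)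
  have "K (1/4::'a) * 4 = 1" using f by (metis K_1 K_mult k4 divide_self_if times_divide_eq_left mult_1)
  then have "K (1/4::'a) = 1/4" using four_nz[OF char] by (simp add: eq_divide_eq)
  then show ?thesis by (metis A_K)
qed


lemma u0_g: "(u0::'a rf^2^2) \<in> g_alg"
  unfolding g_alg_def
proof (intro CollectI conjI allI)
  fix i j show "(u0::'a rf^2^2) $ i $ j \<in> A_ring"
    unfolding u0_def by (simp only: mact_nth vector_add_component tens_nth) (intro A_intros A_quarter)
next
  show "trace (u0::'a rf^2^2) = 0"
    unfolding u0_def by (simp add: mk2_simps trace_mk2) (simp add: diff_divide_distrib add_divide_distrib)
qed

lemma u1_g: "(u1::'a rf^2^2) \<in> g_alg"
  unfolding g_alg_def
proof (intro CollectI conjI allI)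
  fix i j show "(u1::'a rf^2^2) $ i $ j \<in> A_ring"
    unfolding u1_def by (simp only: mact_nth vector_add_component tens_nth) (intro A_intros A_quarter)
next
  show "trace (u1::'a rf^2^2) = 0"
    unfolding u1_def by (simp add: mk2_simps trace_mk2)
qed

lemma u2_g: "(u2::'a rf^2^2) \<in> g_alg"
  unfolding g_alg_def
proof (intro CollectI conjI allI)
  fix i j show "(u2::'a rf^2^2) $ i $ j \<in> A_ring"
    unfolding u2_def by (simp only: mact_nth vector_add_component tens_nth) (intro A_intros A_quarter)
next
  show "trace (u2::'a rf^2^2) = 0"
    unfolding u2_def by (simp add: mk2_simps trace_mk2)
qed

lemma trace_expand: "trace (M::'b::semiring_1^2^2) = M$1$1 + M$2$2"
  by (simp add: trace_def sum_2)

lemma g_mk2: "M \<in> g_alg \<Longrightarrow> M = mk2 (M$1$1) (M$1$2) (M$2$1) (- M$1$1)"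
  unfolding g_alg_def using mk2_expand[of M] by (simp add: trace_expand add_eq_0_iff2)

lemma span_eq: "mk2 a b c (-a) = mact (u0::'a rf^2^2) (2*a + b - c * inverse tt)
   + mact u1 (-2*a + tt''*(c - 2*tt*a - tt*b)) + mact u2 (-c - tt*b)"
proof -
  define R :: "'a rf" where "R = 1 - tt"
  have tR: "tt = 1 - R" by (simp add: R_def)
  have Rnz: "R \<noteq> 0" using omtt_nz by (simp add: R_def)
  have s: "tt'' = inverse R" by (simp add: R_def tt''_def)
  show ?thesis
  unfolding u0_def u1_def u2_def tt'_def s
  apply (simp add: mk2_simps)
  apply (simp add: field_simps nzs[OF char] nz_num[OF char] Rnz)
  apply (simp add: tR algebra_simps)
  done
qed

lemma span: "M \<in> g_alg \<Longrightarrow> \<exists>c0\<in>A_ring. \<exists>c1\<in>A_ring. \<exists>c2\<in>A_ring.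
            M = mact (u0::'a rf^2^2) c0 + mact u1 c1 + mact u2 c2"
proof -
  assume M: "M \<in> g_alg"
  then have e: "\<forall>i j. M$i$j \<in> A_ring" unfolding g_alg_def by blast
  let ?a = "M$1$1" let ?b = "M$1$2" let ?c = "M$2$1"
  have "M = mact (u0::'a rf^2^2) (2*?a + ?b - ?c * inverse tt)
   + mact u1 (-2*?a + tt''*(?c - 2*tt*?a - tt*?b)) + mact u2 (-?c - tt*?b)"
    using g_mk2[OF M] span_eq by metis
  moreover have "2*?a + ?b - ?c * inverse tt \<in> A_ring" using e
    by (metis A_intros K_2)
  moreover have "-2*?a + tt''*(?c - 2*tt*?a - tt*?b) \<in> A_ring" using e
    by (metis A_intros K_2 K_uminus)
  moreover have "-?c - tt*?b \<in> A_ring" using e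
    by (metis A_intros)
  ultimately show ?thesis by blast
qed

lemma indep:
  assumes "mact (u0::'a rf^2^2) c0 + mact u1 c1 + mact u2 c2 = 0"
  shows "c0 = 0 \<and> c1 = 0 \<and> c2 = 0"
proof -
  define S where "S = mact (u0::'a rf^2^2) c0 + mact u1 c1 + mact u2 c2"
  have S0: "S$1$1 = 0" "S$1$2 = 0" "S$2$1 = 0" using assms by (simp_all add: S_def)
  define R :: "'a rf" where "R = 1 - tt"
  have tR: "tt = 1 - R" by (simp add: R_def)
  have Rnz: "R \<noteq> 0" using omtt_nz by (simp add: R_def)
  have s: "tt'' = inverse R" by (simp add: R_def tt''_def)
  have "c0 = 2*S$1$1 + S$1$2 - S$2$1 * inverse tt"
    unfolding S_def u0_def u1_def u2_def tt'_def s
    apply (simp add: mk2_simps)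
    apply (simp add: field_simps nzs[OF char] nz_num[OF char] Rnz)
    apply (simp add: tR algebra_simps)
    done
  moreover have "c1 = -2*S$1$1 + inverse R*(S$2$1 - 2*tt*S$1$1 - tt*S$1$2)"
    unfolding S_def u0_def u1_def u2_def tt'_def s
    apply (simp add: mk2_simps)
    apply (simp add: field_simps nzs[OF char] nz_num[OF char] Rnz)
    apply (simp add: tR algebra_simps)
    done
  moreover have "c2 = -S$2$1 - tt*S$1$2"
    unfolding S_def u0_def u1_def u2_def tt'_def s
    apply (simp add: mk2_simps)
    apply (simp add: field_simps nzs[OF char] nz_num[OF char] Rnz)
    apply (simp add: tR algebra_simps)
    done
  ultimately show ?thesis using S0 by simp
qed

end


definition Em :: "'a::field rf^2^2" where "Em = mk2 0 1 0 0"
definition Fm :: "'a::field rf^2^2" where "Fm = mk2 0 0 1 0"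
definition Hm :: "'a::field rf^2^2" where "Hm = mk2 1 0 0 (-1)"

lemma mact_mact: "mact (mact M f) g = mact M (f * g)"
  by (simp add: vec_eq_iff mult.assoc)
lemma mact_add: "mact M (f + g) = mact M f + mact M g"
  by (simp add: vec_eq_iff distrib_left)
lemma mact_1: "mact M 1 = M"
  by (simp add: vec_eq_iff)
lemma mact_0: "mact M 0 = 0"
  by (simp add: vec_eq_iff)
lemma br_mact: "lie_br (mact X f) (mact Y g) = mact (lie_br X Y) (f * g)"
  by (simp add: vec_eq_iff lie_br_def matrix_matrix_mult_def sum_2 algebra_simps)
lemma mact_neg: "mact M (K (-1)) = - M"
  by (simp add: vec_eq_iff K_uminus K_1)

lemma brEF: "lie_br Em Fm = (Hm :: 'a::field rf^2^2)"
  by (simp add: Em_def Fm_def Hm_def mk2_simps)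
lemma brHE: "lie_br Hm Em = mact (Em :: 'a::field rf^2^2) 2"
  by (simp add: Em_def Fm_def Hm_def mk2_simps)
lemma brHF: "lie_br Hm Fm = mact (Fm :: 'a::field rf^2^2) (-2)"
  by (simp add: Em_def Fm_def Hm_def mk2_simps)

lemma L_K: "M \<in> lie_gen S \<Longrightarrow> mact M (K c) \<in> lie_gen S"
  unfolding K_def by (rule lie_gen.smul)
lemma L_neg: "M \<in> lie_gen S \<Longrightarrow> - M \<in> lie_gen S"
  using L_K[of M S "-1"] by (simp add: mact_neg)
lemma L_diff: "M \<in> lie_gen S \<Longrightarrow> N \<in> lie_gen S \<Longrightarrow> M - N \<in> lie_gen S"
  using L_neg lie_gen.add by (metis diff_conv_add_uminus)

lemmas L_intros = lie_gen.base lie_gen.add lie_gen.br L_diff L_neg L_K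

definition Pf :: "('a::field rf^2^2) set \<Rightarrow> 'a rf \<Rightarrow> bool" where
  "Pf S f \<longleftrightarrow> mact Hm f \<in> lie_gen S \<and> mact Em f \<in> lie_gen S \<and> mact Fm f \<in> lie_gen S"

lemma P_add: "Pf S f \<Longrightarrow> Pf S g \<Longrightarrow> Pf S (f + g)"
  unfolding Pf_def by (simp add: mact_add lie_gen.add)
lemma P_K: "Pf S f \<Longrightarrow> Pf S (f * K c)"
  unfolding Pf_def by (simp add: mact_mact[symmetric] L_K)

context fixes dummy :: "'a::field" assumes char: "(2::'a) \<noteq> 0"
begin

lemma nz_num2: "(numeral (Num.Bit0 n)::'a rf) = 0 \<longleftrightarrow> (numeral n::'a rf) = 0"
  using nz_num[OF char] by blast

lemma half1: "2 * x * K (1/2::'a) = x"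
proof -
  have "K (1/2::'a) * 2 = 1" using char by (metis K_1 K_2 K_mult divide_self_if times_divide_eq_left mult_1)
  then show ?thesis by (metis mult.assoc mult.commute mult_1)
qed
lemma half2: "-2 * x * K (-1/2::'a) = x"
  using half1[of x] by (simp add: K_uminus)

lemma half3: "- (2 * x * K (- (1 / 2::'a))) = x"
  using half1[of x] by (simp add: K_uminus)

lemma P_mult: "Pf S f \<Longrightarrow> Pf S g \<Longrightarrow> Pf S (f * (g::'a rf))"
  unfolding Pf_def
proof (elim conjE, intro conjI)
  assume h: "mact Hm f \<in> lie_gen S" "mact Em f \<in> lie_gen S" "mact Fm f \<in> lie_gen S"
     "mact Hm g \<in> lie_gen S" "mact Em g \<in> lie_gen S" "mact Fm g \<in> lie_gen S"
  have "mact Hm (f * g) = lie_br (mact Em f) (mact Fm g)" by (simp add: br_mact brEF)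
  then show "mact Hm (f * g) \<in> lie_gen S" using h by (simp add: lie_gen.br)
  have "mact Em (f * g) = mact (lie_br (mact Hm f) (mact Em g)) (K (1/2))"
    by (simp add: br_mact brHE mact_mact half1)
  then show "mact Em (f * g) \<in> lie_gen S" using h by (simp add: lie_gen.br L_K)
  have "mact Fm (f * g) = mact (lie_br (mact Hm f) (mact Fm g)) (K (-1/2))"
    by (simp add: br_mact brHF mact_mact half3)
  then show "mact Fm (f * g) \<in> lie_gen S" using h by (simp add: lie_gen.br L_K)
qed

lemma P_fromE: "Pf S 1 \<Longrightarrow> mact Em f \<in> lie_gen S \<Longrightarrow> Pf S (f::'a rf)"
  unfolding Pf_def
proof (elim conjE, intro conjI)
  assume h: "mact Hm 1 \<in> lie_gen S" "mact Em 1 \<in> lie_gen S" "mact Fm 1 \<in> lie_gen S"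
    and e: "mact Em f \<in> lie_gen S"
  have hh: "mact Hm f = lie_br (mact Em f) (mact Fm 1)" by (simp add: br_mact brEF)
  then show "mact Hm f \<in> lie_gen S" using h e by (simp add: lie_gen.br)
  show "mact Em f \<in> lie_gen S" by fact
  have "mact Fm f = mact (lie_br (mact Hm f) (mact Fm 1)) (K (-1/2))"
    by (simp add: br_mact brHF mact_mact half3)
  then show "mact Fm f \<in> lie_gen S" using h e hh by (metis lie_gen.br L_K)
qed

abbreviation "LL \<equiv> lie_gen {u0, u1, u2 :: 'a rf^2^2}"

lemma E1_eq: "(Em :: 'a rf^2^2) = u0 + u1 + lie_br u0 u1 - lie_br u0 u2"
proof -
  define R :: "'a rf" where "R = 1 - tt"
  have tR: "tt = 1 - R" by (simp add: R_def)
  have Rnz: "R \<noteq> 0" using omtt_nz by (simp add: R_def)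
  have s: "tt'' = inverse R" by (simp add: R_def tt''_def)
  show ?thesis
  unfolding Em_def u0_def u1_def u2_def tt'_def s
  by (simp add: mk2_simps; simp add: field_simps nzs[OF char] nz_num[OF char] nz_num2 Rnz; simp add: tR algebra_simps)
qed

lemma F1_eq: "(Fm :: 'a rf^2^2) = (lie_br u0 u2 - lie_br u1 u2) - (u0 + u2)"
proof -
  define R :: "'a rf" where "R = 1 - tt"
  have tR: "tt = 1 - R" by (simp add: R_def)
  have Rnz: "R \<noteq> 0" using omtt_nz by (simp add: R_def)
  have s: "tt'' = inverse R" by (simp add: R_def tt''_def)
  show ?thesis
  unfolding Fm_def u0_def u1_def u2_def tt'_def s
  by (simp add: mk2_simps; simp add: field_simps nzs[OF char] nz_num[OF char] nz_num2 Rnz; simp add: tR algebra_simps)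
qed

lemma Ett_eq: "mact (Em :: 'a rf^2^2) tt = lie_br Em (lie_br Em u1)"
proof -
  define R :: "'a rf" where "R = 1 - tt"
  have tR: "tt = 1 - R" by (simp add: R_def)
  have Rnz: "R \<noteq> 0" using omtt_nz by (simp add: R_def)
  have s: "tt'' = inverse R" by (simp add: R_def tt''_def)
  show ?thesis
  unfolding Em_def u0_def u1_def u2_def tt'_def s
  by (simp add: mk2_simps; simp add: field_simps nzs[OF char] nz_num[OF char] nz_num2 Rnz; simp add: tR algebra_simps)
qed

lemma Einv_eq: "mact (Em :: 'a rf^2^2) (inverse tt) = lie_br (lie_br Fm u2) Em"
proof -
  define R :: "'a rf" where "R = 1 - tt"
  have tR: "tt = 1 - R" by (simp add: R_def)
  have Rnz: "R \<noteq> 0" using omtt_nz by (simp add: R_def)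
  have s: "tt'' = inverse R" by (simp add: R_def tt''_def)
  show ?thesis
  unfolding Em_def Fm_def u0_def u1_def u2_def tt'_def s
  by (simp add: mk2_simps; simp add: field_simps nzs[OF char] nz_num[OF char] nz_num2 Rnz; simp add: tR algebra_simps)
qed

lemma Ett''_eq: "mact (Em :: 'a rf^2^2) (tt * tt'') = lie_br Em (lie_br Em u0)"
proof -
  define R :: "'a rf" where "R = 1 - tt"
  have tR: "tt = 1 - R" by (simp add: R_def)
  have Rnz: "R \<noteq> 0" using omtt_nz by (simp add: R_def)
  have s: "tt'' = inverse R" by (simp add: R_def tt''_def)
  show ?thesis
  unfolding Em_def u0_def u1_def u2_def tt'_def s
  by (simp add: mk2_simps; simp add: field_simps nzs[OF char] nz_num[OF char] nz_num2 Rnz; simp add: tR algebra_simps)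
qed

lemma E_L: "(Em :: 'a rf^2^2) \<in> LL"
  unfolding E1_eq by (intro L_intros; simp)
lemma F_L: "(Fm :: 'a rf^2^2) \<in> LL"
  unfolding F1_eq by (intro L_intros; simp)

lemma P1: "Pf {u0, u1, u2 :: 'a rf^2^2} 1"
  unfolding Pf_def mact_1 using E_L F_L brEF lie_gen.br by metis

lemma Ptt: "Pf {u0, u1, u2 :: 'a rf^2^2} tt"
  by (rule P_fromE[OF P1]) (unfold Ett_eq, intro lie_gen.br E_L F_L lie_gen.base; simp)
lemma Pinv: "Pf {u0, u1, u2 :: 'a rf^2^2} (inverse tt)"
  by (rule P_fromE[OF P1]) (unfold Einv_eq, intro lie_gen.br E_L F_L lie_gen.base; simp)
lemma Ptt'': "Pf {u0, u1, u2 :: 'a rf^2^2} tt''"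
proof -
  have "Pf {u0, u1, u2 :: 'a rf^2^2} (tt * tt'')"
    by (rule P_fromE[OF P1]) (unfold Ett''_eq, intro lie_gen.br E_L F_L lie_gen.base; simp)
  then have "Pf {u0, u1, u2 :: 'a rf^2^2} (inverse tt * (tt * tt''))" by (rule P_mult[OF Pinv])
  moreover have "inverse tt * (tt * tt'') = (tt''::'a rf)"
    by (metis mult.assoc left_inverse mult_1 tt_nz)
  ultimately show ?thesis by simp
qed

lemma Pconst: "Pf {u0, u1, u2 :: 'a rf^2^2} (K c)"
  using P_K[OF P1, of c] by simp

lemma Prf: "Pf {u0, u1, u2 :: 'a rf^2^2} (rf_of_poly p)"
proof (induction p)
  case 0 then show ?case using Pconst[of 0] by (simp add: K_0 rf_0)
next
  case (pCons c p)
  have "rf_of_poly (pCons c p) = K c + (tt::'a rf) * rf_of_poly p"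
  proof -
    have "pCons c p = [:c:] + [:0, 1:] * p" by simp
    then show ?thesis unfolding K_def tt_def by (metis rf_add rf_mult)
  qed
  then show ?case using pCons.IH by (simp add: P_add P_mult Pconst Ptt)
qed

lemma Ppow: "Pf {u0, u1, u2 :: 'a rf^2^2} f \<Longrightarrow> Pf {u0, u1, u2} (f ^ n)"
  by (induction n) (simp_all add: P1 P_mult)

lemma PA: "f \<in> A_ring \<Longrightarrow> Pf {u0, u1, u2 :: 'a rf^2^2} f"
proof -
  assume "f \<in> A_ring"
  then obtain p a b where f: "f = rf_of_poly p / (tt ^ a * (1 - tt) ^ b)"
    unfolding A_ring_def by blast
  have "f = rf_of_poly p * (inverse tt ^ a * tt'' ^ b)"
    unfolding f tt''_def by (simp add: divide_inverse power_inverse inverse_mult_distrib mult_ac)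
  then show ?thesis by (simp add: P_mult Prf Ppow Pinv Ptt'')
qed

lemma gen_sup: "g_alg \<subseteq> LL"
proof
  fix M :: "'a rf^2^2" assume M: "M \<in> g_alg"
  then have e: "\<forall>i j. M$i$j \<in> A_ring" unfolding g_alg_def by blast
  have "M = mact Hm (M$1$1) + mact Em (M$1$2) + mact Fm (M$2$1)"
    using g_mk2[OF char M] by (simp add: Hm_def Em_def Fm_def mk2_simps)
  then show "M \<in> LL" using PA e unfolding Pf_def by (metis lie_gen.add)
qed

lemma gen_sub: "LL \<subseteq> g_alg"
proof
  fix M assume "M \<in> LL"
  then show "M \<in> g_alg"
  proof (induction rule: lie_gen.induct)
    case (base M) then show ?case using u0_g[OF char] u1_g[OF char] u2_g[OF char] by blast
  next
    case zero then show ?case by (simp add: g_alg_def A_0 trace_def)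
  next
    case (add M N) then show ?case by (simp add: g_alg_def A_add trace_def sum_2 algebra_simps)
  next
    case (smul M c) then show ?case
      by (simp add: g_alg_def A_mult A_rf trace_def sum_2 flip: distrib_right)
  next
    case (br M N)
    then have hM: "\<forall>i j. M$i$j \<in> A_ring" and hN: "\<forall>i j. N$i$j \<in> A_ring"
      unfolding g_alg_def by blast+
    show ?case unfolding g_alg_def
      using hM hN by (auto simp: lie_br_def matrix_matrix_mult_def sum_2 trace_def sum_2 algebra_simps
            intro!: A_add A_mult A_diff)
  qed
qed

end

theorem theorem1p2:
  assumes char: "(2::'a::field) \<noteq> 0"
  shows
    \<comment> \<open>(i) basis of g as an A-module\<close>
    "((u0::'a rf ^ 2 ^ 2) \<in> g_alg \<and> (u1::'a rf ^ 2 ^ 2) \<in> g_alg \<and> (u2::'a rf ^ 2 ^ 2) \<in> g_alg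
      \<and> (\<forall>M\<in>(g_alg :: ('a rf ^ 2 ^ 2) set). \<exists>c0\<in>A_ring. \<exists>c1\<in>A_ring. \<exists>c2\<in>A_ring.
            M = mact u0 c0 + mact u1 c1 + mact u2 c2)
      \<and> (\<forall>c0\<in>(A_ring :: 'a rf set). \<forall>c1\<in>A_ring. \<forall>c2\<in>A_ring.
            mact u0 c0 + mact u1 c1 + mact u2 c2 = 0 \<longrightarrow>
            c0 = 0 \<and> c1 = 0 \<and> c2 = 0))
     \<and> \<comment> \<open>(ii) bracket relations\<close>
     (lie_br (u0::'a rf ^ 2 ^ 2) u1 = - mact u2 tt
      \<and> lie_br (u1::'a rf ^ 2 ^ 2) u2 = - mact u0 tt'
      \<and> lie_br (u2::'a rf ^ 2 ^ 2) u0 = - mact u1 tt'')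
     \<and> \<comment> \<open>(iii) generate g as a Lie algebra over k\<close>
     lie_gen {u0, u1, u2 :: 'a rf ^ 2 ^ 2} = g_alg"
  proof -
  show ?thesis
    using u0_g[OF char] u1_g[OF char] u2_g[OF char] span[OF char] indep[OF char]
      br01[OF char] br12[OF char] br20[OF char] gen_sub[OF char] gen_sup[OF char]
    by blast
qed

end
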